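(* Let $\mathcal{X}\in\mathbb{C}^{n_1\times\cdots\times n_d}$, let $\mathcal{L}$ be an $r$-dimensional subspace of $\mathbb{C}^{n_1\times\cdots\times n_d}$ spanned by orthonormal tensors $\{\mathcal{T}_k\}_{k\in[r]}$, and let $\mathbb{P}_{\mathcal{L}^\perp}$ be the orthogonal projection onto the orthogonal complement of $\mathcal{L}$. Fix $\epsilon\in(0,1)$ and suppose a linear operator $L:\mathbb{C}^{n_1\times\cdots\times n_d}\to\mathbb{C}^{m_1\times\cdots\times m_{d'}}$ satisfies: (i) $L$ is an $(\epsilon/6)$-JL embedding of all $\mathcal{Y}\in\mathcal{L}\cup\{\mathbb{P}_{\mathcal{L}^\perp}(\mathcal{X})\}$; (ii) $L$ is an $(\epsilon/24\sqrt{r})$-JL embedding of the $4r$ tensors $$\mathcal{S}':=\bigcup_{k\in[r]}\Big\{\mathcal{P}-\mathcal{T}_k,\ \mathcal{P}+\mathcal{T}_k,\ \mathcal{P}-\mathrm{i}\,\mathcal{T}_k,\ \mathcal{P}+\mathrm{i}\,\mathcal{T}_k\Big\},\qquad \mathcal{P}:=\frac{\mathbb{P}_{\mathcal{L}^\perp}(\mathcal{X})}{\|\mathbb{P}_{\mathcal{L}^\perp}(\mathcal{X})\|}.$$ Let $\mathrm{vect}:\mathbb{C}^{m_1\times\cdots\times m_{d'}}\to\mathbb{C}^{\prod_{\ell=1}^{d'}m_\ell}$ be a reshaping vectorization operator and let $\mathbf{A}\in\mathbb{C}^{m\times\prod_{\ell}m_\ell}$ be an $(\epsilon/3)$-JL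 embedding into $\mathbb{C}^m$ of (every vector in) the subspace $$\mathcal{L}':=\mathrm{span}\{\mathrm{vect}(L(\mathbb{P}_{\mathcal{L}^\perp}(\mathcal{X}))),\mathrm{vect}(L(\mathcal{T}_1)),\dots,\mathrm{vect}(L(\mathcal{T}_r))\}.$$ Then $$\big|\|\mathbf{A}(\mathrm{vect}(L(\mathcal{X}-\mathcal{Y})))\|_2^2-\|\mathcal{X}-\mathcal{Y}\|^2\big|\le\epsilon\|\mathcal{X}-\mathcal{Y}\|^2\quad\text{for all }\mathcal{Y}\in\mathcal{L}.$$
   Context: Tensors carry the inner product $\langle\mathcal{X},\mathcal{Y}\rangle=\sum\mathcal{X}_{i_1\dots i_d}\overline{\mathcal{Y}_{i_1\dots i_d}}$ and norm $\|\cdot\|$; $\mathrm{i}$ is the imaginary unit. A linear map $L$ is an $\epsilon$-JL embedding of a set $S$ if $\|L(x)\|^2=(1+\epsilon_x)\|x\|^2$ with $\epsilon_x\in(-\epsilon,\epsilon)$ for every $x\in S$. *)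

theory Defs
  imports Complex_Main
begin

(* A tensor of shape ns = [n_1,...,n_d] is a function on index lists, zero outside
   the index set; a vector in C^N is a function nat => complex zero outside {..<N}. *)

definition tindices :: "nat list \<Rightarrow> nat list set" where
  "tindices ns = {is. length is = length ns \<and> (\<forall>k<length ns. is ! k < ns ! k)}"

definition tensors :: "nat list \<Rightarrow> (nat list \<Rightarrow> complex) set" where
  "tensors ns = {X. \<forall>is. is \<notin> tindices ns \<longrightarrow> X is = 0}"

definition tinner :: "nat list \<Rightarrow> (nat list \<Rightarrow> complex) \<Rightarrow> (nat list \<Rightarrow> complex) \<Rightarrow> complex" where
  "tinner ns X Y = (\<Sum>is\<in>tindices ns. X is * cnj (Y is))"

definition tnorm :: "nat list \<Rightarrow> (nat list \<Rightarrow> complex) \<Rightarrow> real" where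
  "tnorm ns X = sqrt (\<Sum>is\<in>tindices ns. (cmod (X is))\<^sup>2)"

definition vecs :: "nat \<Rightarrow> (nat \<Rightarrow> complex) set" where
  "vecs N = {v. \<forall>j. N \<le> j \<longrightarrow> v j = 0}"

definition vnorm :: "nat \<Rightarrow> (nat \<Rightarrow> complex) \<Rightarrow> real" where
  "vnorm N v = sqrt (\<Sum>j<N. (cmod (v j))\<^sup>2)"

definition tspan :: "nat \<Rightarrow> (nat \<Rightarrow> (nat list \<Rightarrow> complex)) \<Rightarrow> (nat list \<Rightarrow> complex) set" where
  "tspan r T = {\<lambda>is. \<Sum>k<r. c k * T k is | c. True}"

definition vspan :: "nat \<Rightarrow> (nat \<Rightarrow> (nat \<Rightarrow> complex)) \<Rightarrow> (nat \<Rightarrow> complex) set" where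
  "vspan q V = {\<lambda>j. \<Sum>k<q. c k * V k j | c. True}"

definition proj_perp :: "nat list \<Rightarrow> (nat list \<Rightarrow> complex) set \<Rightarrow> (nat list \<Rightarrow> complex) \<Rightarrow> (nat list \<Rightarrow> complex)" where
  "proj_perp ns S X = (THE Z. Z \<in> tensors ns \<and> (\<forall>Y\<in>S. tinner ns Z Y = 0) \<and> (\<lambda>is. X is - Z is) \<in> S)"

definition tlinear :: "nat list \<Rightarrow> nat list \<Rightarrow> ((nat list \<Rightarrow> complex) \<Rightarrow> (nat list \<Rightarrow> complex)) \<Rightarrow> bool" where
  "tlinear ns ms L \<longleftrightarrow> (\<forall>X\<in>tensors ns. L X \<in> tensors ms) \<and>
     (\<forall>X\<in>tensors ns. \<forall>Y\<in>tensors ns. L (\<lambda>is. X is + Y is) = (\<lambda>is. L X is + L Y is)) \<and>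
     (\<forall>X\<in>tensors ns. \<forall>c. L (\<lambda>is. c * X is) = (\<lambda>is. c * L X is))"

definition tJL :: "nat list \<Rightarrow> nat list \<Rightarrow> ((nat list \<Rightarrow> complex) \<Rightarrow> (nat list \<Rightarrow> complex)) \<Rightarrow> real \<Rightarrow> (nat list \<Rightarrow> complex) set \<Rightarrow> bool" where
  "tJL ns ms L eps S \<longleftrightarrow> (\<forall>X\<in>S. \<exists>e. e \<in> {-eps<..<eps} \<and> (tnorm ms (L X))\<^sup>2 = (1 + e) * (tnorm ns X)\<^sup>2)"

definition reshaping :: "nat list \<Rightarrow> (nat list \<Rightarrow> nat) \<Rightarrow> bool" where
  "reshaping ms idx \<longleftrightarrow> bij_betw idx (tindices ms) {..<prod_list ms}"

definition vect :: "nat list \<Rightarrow> (nat list \<Rightarrow> nat) \<Rightarrow> (nat list \<Rightarrow> complex) \<Rightarrow> (nat \<Rightarrow> complex)" where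
  "vect ms idx Y = (\<lambda>j. if j < prod_list ms then Y (inv_into (tindices ms) idx j) else 0)"

definition mat_app :: "nat \<Rightarrow> nat \<Rightarrow> (nat \<Rightarrow> nat \<Rightarrow> complex) \<Rightarrow> (nat \<Rightarrow> complex) \<Rightarrow> (nat \<Rightarrow> complex)" where
  "mat_app m N A v = (\<lambda>i. if i < m then (\<Sum>j<N. A i j * v j) else 0)"

definition mJL :: "nat \<Rightarrow> nat \<Rightarrow> (nat \<Rightarrow> nat \<Rightarrow> complex) \<Rightarrow> real \<Rightarrow> (nat \<Rightarrow> complex) set \<Rightarrow> bool" where
  "mJL m N A eps S \<longleftrightarrow> (\<forall>v\<in>S. \<exists>e. e \<in> {-eps<..<eps} \<and> (vnorm m (mat_app m N A v))\<^sup>2 = (1 + e) * (vnorm N v)\<^sup>2)"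

end

theory Submission
  imports Defs
begin


lemma finite_tindices: "finite (tindices ns)"
proof -
  have "tindices ns \<subseteq> {xs. set xs \<subseteq> {..<sum_list ns} \<and> length xs = length ns}"
  proof
    fix xs assume "xs \<in> tindices ns"
    then have l: "length xs = length ns" and b: "\<forall>k<length ns. xs ! k < ns ! k"
      unfolding tindices_def by auto
    have "set xs \<subseteq> {..<sum_list ns}"
    proof
      fix x assume "x \<in> set xs"
      then obtain k where "k < length xs" "xs ! k = x" by (auto simp: in_set_conv_nth)
      then show "x \<in> {..<sum_list ns}" using l b elem_le_sum_list[of k ns]
        by (metis lessThan_iff order_less_le_trans)
    qed
    then show "xs \<in> {xs. set xs \<subseteq> {..<sum_list ns} \<and> length xs = length ns}" using l by auto
  qed
  moreover have "finite {xs. set xs \<subseteq> {..<sum_list ns} \<and> length xs = length ns}"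
    by (rule finite_lists_length_eq) auto
  ultimately show ?thesis by (rule finite_subset)
qed

lemma tnorm_sq: "(tnorm ns X)\<^sup>2 = (\<Sum>i\<in>tindices ns. (cmod (X i))\<^sup>2)"
  unfolding tnorm_def by (simp add: sum_nonneg)

lemma tnorm_nonneg: "tnorm ns X \<ge> 0" unfolding tnorm_def by (simp add: sum_nonneg)

lemma cmod_add_sq: "(cmod (u + c * v))\<^sup>2 = (cmod u)\<^sup>2 + (cmod c)\<^sup>2 * (cmod v)\<^sup>2 + 2 * Re (cnj c * (u * cnj v))"
  unfolding cmod_power2 by (simp add: power2_eq_square algebra_simps)

lemma tnorm_add: "(tnorm ns (\<lambda>i. U i + c * V i))\<^sup>2 =
   (tnorm ns U)\<^sup>2 + (cmod c)\<^sup>2 * (tnorm ns V)\<^sup>2 + 2 * Re (cnj c * tinner ns U V)"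
  unfolding tnorm_sq tinner_def cmod_add_sq
  by (simp add: sum.distrib sum_distrib_left Re_sum)

lemma tnorm_scale: "tnorm ns (\<lambda>i. c * U i) = cmod c * tnorm ns U"
  unfolding tnorm_def norm_mult power_mult_distrib
  by (simp add: sum_distrib_left[symmetric] real_sqrt_mult)

lemma tinner_sum_right: "tinner ns U (\<lambda>i. \<Sum>k\<in>K. d k * V k i) = (\<Sum>k\<in>K. cnj (d k) * tinner ns U (V k))"
proof -
  have "tinner ns U (\<lambda>i. \<Sum>k\<in>K. d k * V k i) = (\<Sum>i\<in>tindices ns. \<Sum>k\<in>K. cnj (d k) * (U i * cnj (V k i)))"
    unfolding tinner_def by (simp add: sum_distrib_left mult_ac)
  also have "\<dots> = (\<Sum>k\<in>K. \<Sum>i\<in>tindices ns. cnj (d k) * (U i * cnj (V k i)))"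
    by (rule sum.swap)
  also have "\<dots> = (\<Sum>k\<in>K. cnj (d k) * tinner ns U (V k))"
    unfolding tinner_def by (simp add: sum_distrib_left)
  finally show ?thesis .
qed

lemma tinner_diff_sum_left: "tinner ns (\<lambda>i. U i - (\<Sum>k\<in>K. d k * V k i)) Z
   = tinner ns U Z - (\<Sum>k\<in>K. d k * tinner ns (V k) Z)"
proof -
  have "tinner ns (\<lambda>i. U i - (\<Sum>k\<in>K. d k * V k i)) Z = tinner ns U Z - (\<Sum>i\<in>tindices ns. (\<Sum>k\<in>K. d k * V k i) * cnj (Z i))"
    unfolding tinner_def by (simp add: left_diff_distrib sum_subtractf)
  also have "(\<Sum>i\<in>tindices ns. (\<Sum>k\<in>K. d k * V k i) * cnj (Z i)) = (\<Sum>i\<in>tindices ns. \<Sum>k\<in>K. d k * (V k i * cnj (Z i)))"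
    by (intro sum.cong refl) (simp add: sum_distrib_left sum_distrib_right mult_ac)
  also have "\<dots> = (\<Sum>k\<in>K. \<Sum>i\<in>tindices ns. d k * (V k i * cnj (Z i)))"
    by (rule sum.swap)
  also have "\<dots> = (\<Sum>k\<in>K. d k * tinner ns (V k) Z)"
    unfolding tinner_def by (simp add: sum_distrib_left)
  finally show ?thesis .
qed

lemma tinner_diff_left: "tinner ns (\<lambda>i. U i - V i) Z = tinner ns U Z - tinner ns V Z"
  unfolding tinner_def by (simp add: left_diff_distrib sum_subtractf)

lemma tinner_scale_left: "tinner ns (\<lambda>i. c * U i) Z = c * tinner ns U Z"
  unfolding tinner_def by (simp add: sum_distrib_left mult_ac)

lemma tinner_self: "tinner ns X X = complex_of_real ((tnorm ns X)\<^sup>2)"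
  unfolding tinner_def tnorm_sq by (simp only: of_real_sum complex_norm_square)

lemma tnorm_zero: assumes "X \<in> tensors ns" "tnorm ns X = 0" shows "X = (\<lambda>_. 0)"
proof
  fix i
  have "(\<Sum>i\<in>tindices ns. (cmod (X i))\<^sup>2) = 0" using assms(2) tnorm_sq[of ns X] by simp
  then have "\<forall>i\<in>tindices ns. (cmod (X i))\<^sup>2 = 0"
    by (subst sum_nonneg_eq_0_iff[OF finite_tindices, symmetric]) simp_all
  then show "X i = 0" using assms(1) unfolding tensors_def by (cases "i \<in> tindices ns") auto
qed

lemma tensors_sum: "(\<And>k. k \<in> K \<Longrightarrow> V k \<in> tensors ns) \<Longrightarrow> (\<lambda>i. \<Sum>k\<in>K. d k * V k i) \<in> tensors ns"
  unfolding tensors_def by auto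

lemma tensors_comb: "U \<in> tensors ns \<Longrightarrow> V \<in> tensors ns \<Longrightarrow> (\<lambda>i. a * U i + b * V i) \<in> tensors ns"
  unfolding tensors_def by auto

lemma tlin_scale: "tlinear ns ms L \<Longrightarrow> U \<in> tensors ns \<Longrightarrow> L (\<lambda>i. c * U i) = (\<lambda>i. c * L U i)"
  unfolding tlinear_def by blast

lemma tlin_add: "tlinear ns ms L \<Longrightarrow> U \<in> tensors ns \<Longrightarrow> V \<in> tensors ns \<Longrightarrow>
   L (\<lambda>i. U i + c * V i) = (\<lambda>i. L U i + c * L V i)"
proof -
  assume a: "tlinear ns ms L" "U \<in> tensors ns" "V \<in> tensors ns"
  have c: "(\<lambda>i. c * V i) \<in> tensors ns" using a(3) unfolding tensors_def by auto
  have ad: "\<forall>X\<in>tensors ns. \<forall>Y\<in>tensors ns. L (\<lambda>is. X is + Y is) = (\<lambda>is. L X is + L Y is)"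
    using a(1) unfolding tlinear_def by blast
  have "L (\<lambda>i. U i + c * V i) = (\<lambda>i. L U i + L (\<lambda>i. c * V i) i)"
    by (rule ad[rule_format, OF a(2) c])
  then show ?thesis using tlin_scale[OF a(1) a(3)] by simp
qed

lemma tlin_zero: "tlinear ns ms L \<Longrightarrow> L (\<lambda>_. 0) = (\<lambda>_. 0)"
proof -
  assume a: "tlinear ns ms L"
  have z: "(\<lambda>_. 0) \<in> tensors ns" unfolding tensors_def by auto
  have "L (\<lambda>i. 0 * (\<lambda>_. 0) i) = (\<lambda>i. 0 * L (\<lambda>_. 0) i)" by (rule tlin_scale[OF a z])
  then show ?thesis by simp
qed

lemma tlin_sum: assumes "tlinear ns ms L" "finite K" "\<And>k. k \<in> K \<Longrightarrow> V k \<in> tensors ns"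
  shows "L (\<lambda>i. \<Sum>k\<in>K. d k * V k i) = (\<lambda>i. \<Sum>k\<in>K. d k * L (V k) i)"
  using assms(2,3)
proof (induction K rule: finite_induct)
  case empty
  then show ?case using tlin_zero[OF assms(1)] by simp
next
  case (insert x F)
  have s: "(\<lambda>i. \<Sum>k\<in>F. d k * V k i) \<in> tensors ns" using insert by (intro tensors_sum) auto
  have "L (\<lambda>i. \<Sum>k\<in>insert x F. d k * V k i) = L (\<lambda>i. (\<lambda>i. \<Sum>k\<in>F. d k * V k i) i + d x * V x i)"
    using insert by (simp add: add.commute)
  also have "\<dots> = (\<lambda>i. L (\<lambda>i. \<Sum>k\<in>F. d k * V k i) i + d x * L (V x) i)"
    using tlin_add[OF assms(1) s, of "V x" "d x"] insert by simp
  finally show ?case using insert by (simp add: add.commute)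
qed

lemma vnorm_vect: assumes "reshaping ms idx"
  shows "vnorm (prod_list ms) (vect ms idx Y) = tnorm ms Y"
proof -
  have b: "bij_betw idx (tindices ms) {..<prod_list ms}" using assms unfolding reshaping_def .
  have "(\<Sum>j<prod_list ms. (cmod (vect ms idx Y j))\<^sup>2) = (\<Sum>i\<in>tindices ms. (cmod (vect ms idx Y (idx i)))\<^sup>2)"
    using sum.reindex_bij_betw[OF b, of "\<lambda>j. (cmod (vect ms idx Y j))\<^sup>2"] by simp
  also have "\<dots> = (\<Sum>i\<in>tindices ms. (cmod (Y i))\<^sup>2)"
  proof (rule sum.cong)
    fix x assume x: "x \<in> tindices ms"
    have "idx x < prod_list ms" using b x bij_betw_apply by fastforce
    moreover have "inv_into (tindices ms) idx (idx x) = x" using b x bij_betw_imp_inj_on inv_into_f_f by fastforce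
    ultimately show "(cmod (vect ms idx Y (idx x)))\<^sup>2 = (cmod (Y x))\<^sup>2" unfolding vect_def by simp
  qed simp
  finally show ?thesis unfolding vnorm_def tnorm_def by simp
qed



lemma tensors_diff: "U \<in> tensors ns \<Longrightarrow> V \<in> tensors ns \<Longrightarrow> (\<lambda>i. U i - V i) \<in> tensors ns"
  unfolding tensors_def by auto

lemma tinner_sum_left: "tinner ns (\<lambda>i. \<Sum>k\<in>K. d k * V k i) Z = (\<Sum>k\<in>K. d k * tinner ns (V k) Z)"
  using tinner_diff_sum_left[where U="\<lambda>_. 0" and ns=ns and K=K and d=d and V=V and Z=Z] by (simp add: tinner_def sum_negf)

lemma tinner_zero_left: "tinner ns (\<lambda>_. 0) Z = 0"
  unfolding tinner_def by simp

lemma tJL_D: "tJL ns ms L eps S \<Longrightarrow> U \<in> S \<Longrightarrow> \<exists>e. \<bar>e\<bar> < eps \<and> (tnorm ms (L U))\<^sup>2 = (1 + e) * (tnorm ns U)\<^sup>2"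
  unfolding tJL_def by (fastforce simp: abs_less_iff)

lemma mJL_D: "mJL m N A eps S \<Longrightarrow> v \<in> S \<Longrightarrow> \<exists>e. \<bar>e\<bar> < eps \<and> (vnorm m (mat_app m N A v))\<^sup>2 = (1 + e) * (vnorm N v)\<^sup>2"
  unfolding mJL_def by (fastforce simp: abs_less_iff)

lemma final_arith:
  fixes M N a b \<epsilon> :: real
  assumes "\<bar>M - N\<bar> \<le> \<epsilon> / 4 * N" "\<bar>b\<bar> < \<epsilon> / 3" "0 < \<epsilon>" "\<epsilon> < 1" "0 \<le> N" "0 \<le> M"
  shows "\<bar>(1 + b) * M - N\<bar> \<le> \<epsilon> * N"
proof -
  have M0: "M \<le> N + \<epsilon>/4 * N" using assms(1) by linarith
  have M: "M \<le> (1 + \<epsilon>/4) * N" using M0 by (simp add: algebra_simps)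
  have "\<bar>b * M\<bar> = \<bar>b\<bar> * M" using assms(6) by (simp add: abs_mult)
  also have "\<dots> \<le> \<epsilon>/3 * M" using assms(2,6) by (intro mult_right_mono) auto
  also have "\<dots> \<le> \<epsilon>/3 * ((1 + \<epsilon>/4) * N)" using M assms(3) by (intro mult_left_mono) auto
  also have "\<dots> \<le> \<epsilon>/3 * (2 * N)" using assms(3,4,5) by (intro mult_left_mono mult_right_mono) auto
  finally have "\<bar>b * M\<bar> \<le> 2 * \<epsilon> / 3 * N" by simp
  moreover have "(1 + b) * M - N = (M - N) + b * M" by (simp add: algebra_simps)
  moreover have "0 \<le> \<epsilon> * N" using assms(3,5) by simp
  moreover have "2 * \<epsilon> / 3 * N = 2/3 * (\<epsilon> * N)" "\<epsilon> / 4 * N = 1/4 * (\<epsilon> * N)" by simp_all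
  moreover have "\<bar>(M - N) + b * M\<bar> \<le> \<bar>M - N\<bar> + \<bar>b * M\<bar>" by (rule abs_triangle_ineq)
  ultimately show ?thesis using assms(1) by linarith
qed

theorem theorem5:
  fixes ns ms :: "nat list" and r m :: nat
    and X :: "nat list \<Rightarrow> complex"
    and T :: "nat \<Rightarrow> nat list \<Rightarrow> complex"
    and L :: "(nat list \<Rightarrow> complex) \<Rightarrow> (nat list \<Rightarrow> complex)"
    and idx :: "nat list \<Rightarrow> nat"
    and A :: "nat \<Rightarrow> nat \<Rightarrow> complex"
    and \<epsilon> :: real
  defines "Lsp \<equiv> tspan r T"
    and "Pp \<equiv> proj_perp ns (tspan r T) X"
  defines "P \<equiv> (\<lambda>is. Pp is / complex_of_real (tnorm ns Pp))"
  assumes X: "X \<in> tensors ns"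
    and T_in: "\<And>k. k < r \<Longrightarrow> T k \<in> tensors ns"
    and T_orthonormal: "\<And>j k. j < r \<Longrightarrow> k < r \<Longrightarrow> tinner ns (T j) (T k) = (if j = k then 1 else 0)"
    and eps: "0 < \<epsilon>" "\<epsilon> < 1"
    and L_lin: "tlinear ns ms L"
    and JL1: "tJL ns ms L (\<epsilon> / 6) (Lsp \<union> {Pp})"
    and JL2: "tJL ns ms L (\<epsilon> / (24 * sqrt (real r)))
               (\<Union>k\<in>{..<r}. {(\<lambda>is. P is - T k is), (\<lambda>is. P is + T k is),
                             (\<lambda>is. P is - \<i> * T k is), (\<lambda>is. P is + \<i> * T k is)})"
    and vect: "reshaping ms idx"
    and A_JL: "mJL m (prod_list ms) A (\<epsilon> / 3)
               (vspan (Suc r) (\<lambda>k. if k = 0 then vect ms idx (L Pp) else vect ms idx (L (T (k - 1)))))"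
  shows "\<forall>Y\<in>Lsp.
     \<bar>(vnorm m (mat_app m (prod_list ms) A (vect ms idx (L (\<lambda>is. X is - Y is)))))\<^sup>2
        - (tnorm ns (\<lambda>is. X is - Y is))\<^sup>2\<bar>
     \<le> \<epsilon> * (tnorm ns (\<lambda>is. X is - Y is))\<^sup>2"
proof
  fix Y assume "Y \<in> Lsp"
  then obtain c where Y: "Y = (\<lambda>i. \<Sum>k<r. c k * T k i)" unfolding Lsp_def tspan_def by auto
  define \<alpha> where "\<alpha> k = tinner ns X (T k)" for k
  define Q where "Q = (\<lambda>i. X i - (\<Sum>k<r. \<alpha> k * T k i))"
  have Tin: "\<And>k. k \<in> {..<r} \<Longrightarrow> T k \<in> tensors ns" using T_in by auto
  have Q_T: "tinner ns Q (T j) = 0" if j: "j < r" for j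
  proof -
    have "tinner ns Q (T j) = \<alpha> j - (\<Sum>k<r. \<alpha> k * tinner ns (T k) (T j))"
      unfolding Q_def tinner_diff_sum_left \<alpha>_def ..
    also have "(\<Sum>k<r. \<alpha> k * tinner ns (T k) (T j)) = (\<Sum>k<r. if k = j then \<alpha> k else 0)"
      by (rule sum.cong) (auto simp: T_orthonormal j)
    also have "\<dots> = \<alpha> j" using j by simp
    finally show ?thesis by simp
  qed
  have Q_perp: "\<forall>Z\<in>tspan r T. tinner ns Q Z = 0"
  proof
    fix Z assume "Z \<in> tspan r T"
    then obtain b where "Z = (\<lambda>i. \<Sum>k<r. b k * T k i)" unfolding tspan_def by auto
    then show "tinner ns Q Z = 0" by (simp add: tinner_sum_right Q_T)
  qed
  have Q_tens: "Q \<in> tensors ns" unfolding Q_def by (intro tensors_diff X tensors_sum Tin)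
  have Q_span: "(\<lambda>i. X i - Q i) \<in> tspan r T" unfolding tspan_def Q_def by auto
  have PpQ: "Pp = Q"
    unfolding Pp_def proj_perp_def
  proof (rule the_equality)
    show "Q \<in> tensors ns \<and> (\<forall>Y\<in>tspan r T. tinner ns Q Y = 0) \<and> (\<lambda>i. X i - Q i) \<in> tspan r T"
      using Q_tens Q_perp Q_span by blast
  next
    fix Z assume Z: "Z \<in> tensors ns \<and> (\<forall>Y\<in>tspan r T. tinner ns Z Y = 0) \<and> (\<lambda>i. X i - Z i) \<in> tspan r T"
    then obtain b where b: "(\<lambda>i. X i - Z i) = (\<lambda>i. \<Sum>k<r. b k * T k i)" unfolding tspan_def by auto
    define D where "D = (\<lambda>i. Z i - Q i)"
    have D_tens: "D \<in> tensors ns" unfolding D_def using Z Q_tens by (intro tensors_diff) auto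
    have "D i = (\<Sum>k<r. (\<alpha> k - b k) * T k i)" for i
    proof -
      have "X i - Z i = (\<Sum>k<r. b k * T k i)" using fun_cong[OF b, of i] by simp
      then show ?thesis unfolding D_def Q_def
        by (simp add: left_diff_distrib sum_subtractf algebra_simps)
    qed
    then have "D = (\<lambda>i. \<Sum>k<r. (\<alpha> k - b k) * T k i)" by (rule ext)
    then have D_span: "D \<in> tspan r T" unfolding tspan_def
      by (intro CollectI exI[of _ "\<lambda>k. \<alpha> k - b k"]) simp
    have "tinner ns D D = tinner ns Z D - tinner ns Q D" unfolding D_def[of] by (rule tinner_diff_left)
    also have "\<dots> = 0" using Z D_span Q_perp by simp
    finally have "complex_of_real ((tnorm ns D)\<^sup>2) = 0" by (simp add: tinner_self)
    then have "tnorm ns D = 0" by simp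
    then have "D = (\<lambda>_. 0)" using D_tens by (intro tnorm_zero)
    then show "Z = Q" unfolding D_def by (metis (no_types) eq_iff_diff_eq_0 ext)
  qed
  define d where "d k = \<alpha> k - c k" for k
  define W where "W = (\<lambda>i. \<Sum>k<r. d k * T k i)"
  define p where "p = tnorm ns Pp"
  define w where "w = tnorm ns W"
  have p0: "p \<ge> 0" "w \<ge> 0" unfolding p_def w_def by (simp_all add: tnorm_nonneg)
  have Pp_tens: "Pp \<in> tensors ns" using PpQ Q_tens by simp
  have W_tens: "W \<in> tensors ns" unfolding W_def by (intro tensors_sum Tin)
  have W_Lsp: "W \<in> Lsp" unfolding W_def Lsp_def tspan_def by auto
  have XY: "(\<lambda>i. X i - Y i) = (\<lambda>i. Pp i + 1 * W i)"
  proof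
    fix i show "X i - Y i = Pp i + 1 * W i"
      unfolding Y PpQ Q_def W_def d_def by (simp add: left_diff_distrib sum_subtractf algebra_simps)
  qed
  have Pp_W: "tinner ns Pp W = 0" unfolding W_def by (simp add: tinner_sum_right PpQ Q_T)
  have N: "(tnorm ns (\<lambda>i. X i - Y i))\<^sup>2 = p\<^sup>2 + w\<^sup>2"
    unfolding XY tnorm_add p_def w_def Pp_W by simp
  have WW: "tinner ns W W = (\<Sum>k<r. cnj (d k) * d k)"
  proof -
    have "tinner ns W (T j) = d j" if j: "j < r" for j
    proof -
      have "tinner ns W (T j) = (\<Sum>k<r. d k * tinner ns (T k) (T j))" unfolding W_def tinner_sum_left ..
      also have "\<dots> = (\<Sum>k<r. if k = j then d k else 0)"
        by (rule sum.cong) (auto simp: T_orthonormal j)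
      also have "\<dots> = d j" using j by simp
      finally show ?thesis .
    qed
    then show ?thesis by (subst (2) W_def) (simp add: tinner_sum_right)
  qed
  have w2: "w\<^sup>2 = (\<Sum>k<r. (cmod (d k))\<^sup>2)"
  proof -
    have "complex_of_real (w\<^sup>2) = (\<Sum>k<r. cnj (d k) * d k)" unfolding w_def using WW by (simp add: tinner_self)
    also have "\<dots> = complex_of_real (\<Sum>k<r. (cmod (d k))\<^sup>2)"
      by (simp only: of_real_sum complex_norm_square mult.commute)
    finally show ?thesis using of_real_eq_iff by blast
  qed
  have LXY: "L (\<lambda>i. X i - Y i) = (\<lambda>i. L Pp i + 1 * L W i)"
    unfolding XY by (rule tlin_add[OF L_lin Pp_tens W_tens])
  have LW: "L W = (\<lambda>i. \<Sum>k<r. d k * L (T k) i)"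
    unfolding W_def by (rule tlin_sum[OF L_lin]) (auto intro: Tin)
  define C where "C = tinner ms (L Pp) (L W)"
  have M: "(tnorm ms (L (\<lambda>i. X i - Y i)))\<^sup>2 = (tnorm ms (L Pp))\<^sup>2 + (tnorm ms (L W))\<^sup>2 + 2 * Re C"
    unfolding LXY tnorm_add C_def by simp
  obtain a1 where a1: "\<bar>a1\<bar> < \<epsilon>/6" "(tnorm ms (L Pp))\<^sup>2 = (1 + a1) * p\<^sup>2"
    using tJL_D[OF JL1, of Pp] unfolding p_def by auto
  obtain a2 where a2: "\<bar>a2\<bar> < \<epsilon>/6" "(tnorm ms (L W))\<^sup>2 = (1 + a2) * w\<^sup>2"
    using tJL_D[OF JL1, of W] W_Lsp unfolding w_def by auto
  have Cb: "cmod C \<le> \<epsilon>/24 * (p\<^sup>2 + w\<^sup>2)"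
  proof (cases "r = 0 \<or> p = 0")
    case True
    then show ?thesis
    proof
      assume "r = 0" then show ?thesis unfolding C_def LW using p0 eps by (simp add: tinner_def)
    next
      assume "p = 0"
      then have "Pp = (\<lambda>_. 0)" using Pp_tens unfolding p_def by (intro tnorm_zero)
      then have "L Pp = (\<lambda>_. 0)" using tlin_zero[OF L_lin] by simp
      then show ?thesis unfolding C_def using p0 eps by (simp add: tinner_zero_left)
    qed
  next
    case False
    then have r0: "r > 0" and pp: "p > 0" using p0 by auto
    define s where "s = sqrt (real r)"
    have s0: "s > 0" and s2: "s\<^sup>2 = real r" unfolding s_def using r0 by simp_all
    define dl where "dl = \<epsilon> / (24 * s)"
    have P_eq: "P = (\<lambda>i. complex_of_real (1/p) * Pp i)" unfolding P_def p_def[symmetric]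
      by (auto simp: field_simps)
    have P_tens: "P \<in> tensors ns" unfolding P_eq using Pp_tens unfolding tensors_def by auto
    have PpP: "Pp = (\<lambda>i. complex_of_real p * P i)" unfolding P_eq using pp by auto
    have LPp: "L Pp = (\<lambda>i. complex_of_real p * L P i)"
      by (subst PpP) (rule tlin_scale[OF L_lin P_tens])
    have nP: "tnorm ns P = 1" unfolding P_eq tnorm_scale p_def[symmetric] using pp by (simp add: norm_divide)
    have PT: "tinner ns P (T k) = 0" if "k < r" for k
      unfolding P_eq tinner_scale_left using Q_T[OF that] PpQ by simp
    have nT: "tnorm ns (T k) = 1" if "k < r" for k
    proof -
      have "complex_of_real ((tnorm ns (T k))\<^sup>2) = 1" using T_orthonormal[OF that that] by (simp add: tinner_self)
      then have "(tnorm ns (T k))\<^sup>2 = 1" using of_real_eq_1_iff by blast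
      then show ?thesis using tnorm_nonneg by (metis abs_of_nonneg power2_eq_1_iff one_neq_neg_one abs_neg_one abs_one)
    qed
    define z where "z k = tinner ms (L P) (L (T k))" for k
    have zb: "cmod (z k) \<le> 2 * dl" if k: "k < r" for k
    proof -
      have key: "\<exists>e. \<bar>e\<bar> < dl \<and> (tnorm ms (L P))\<^sup>2 + (cmod c')\<^sup>2 * (tnorm ms (L (T k)))\<^sup>2 + 2 * Re (cnj c' * z k) = (1 + e) * 2"
        if c': "c' \<in> {1, -1, \<i>, -\<i>}" for c'
      proof -
        have mem: "(\<lambda>i. P i + c' * T k i) \<in> (\<Union>k\<in>{..<r}. {(\<lambda>is. P is - T k is), (\<lambda>is. P is + T k is),
                             (\<lambda>is. P is - \<i> * T k is), (\<lambda>is. P is + \<i> * T k is)})"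
          using c' k by auto
        obtain e where e: "\<bar>e\<bar> < dl" "(tnorm ms (L (\<lambda>i. P i + c' * T k i)))\<^sup>2 = (1 + e) * (tnorm ns (\<lambda>i. P i + c' * T k i))\<^sup>2"
          using tJL_D[OF JL2 mem] unfolding dl_def s_def by auto
        have cm: "cmod c' = 1" using c' by auto
        have "(tnorm ns (\<lambda>i. P i + c' * T k i))\<^sup>2 = 2"
          unfolding tnorm_add nP nT[OF k] PT[OF k] cm by simp
        moreover have "L (\<lambda>i. P i + c' * T k i) = (\<lambda>i. L P i + c' * L (T k) i)"
          by (rule tlin_add[OF L_lin P_tens T_in[OF k]])
        ultimately have "(tnorm ms (\<lambda>i. L P i + c' * L (T k) i))\<^sup>2 = (1 + e) * 2" using e(2) by simp
        then show ?thesis using e(1) unfolding tnorm_add z_def[symmetric] by blast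
      qed
      obtain e1 where e1: "\<bar>e1\<bar> < dl" "(tnorm ms (L P))\<^sup>2 + (tnorm ms (L (T k)))\<^sup>2 + 2 * Re (z k) = (1 + e1) * 2"
        using key[of 1] by auto
      obtain e2 where e2: "\<bar>e2\<bar> < dl" "(tnorm ms (L P))\<^sup>2 + (tnorm ms (L (T k)))\<^sup>2 - 2 * Re (z k) = (1 + e2) * 2"
        using key[of "-1"] by auto
      obtain e3 where e3: "\<bar>e3\<bar> < dl" "(tnorm ms (L P))\<^sup>2 + (tnorm ms (L (T k)))\<^sup>2 + 2 * Im (z k) = (1 + e3) * 2"
        using key[of "\<i>"] by auto
      obtain e4 where e4: "\<bar>e4\<bar> < dl" "(tnorm ms (L P))\<^sup>2 + (tnorm ms (L (T k)))\<^sup>2 - 2 * Im (z k) = (1 + e4) * 2"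
        using key[of "-\<i>"] by auto
      have "\<bar>Re (z k)\<bar> \<le> dl" using e1 e2 by (auto simp: abs_le_iff abs_less_iff algebra_simps)
      moreover have "\<bar>Im (z k)\<bar> \<le> dl" using e3 e4 by (auto simp: abs_le_iff abs_less_iff algebra_simps)
      ultimately show ?thesis using cmod_le[of "z k"] by linarith
    qed
    have C_eq: "C = complex_of_real p * (\<Sum>k<r. cnj (d k) * z k)"
      unfolding C_def LPp LW tinner_scale_left tinner_sum_right z_def ..
    have "cmod (\<Sum>k<r. cnj (d k) * z k) \<le> (\<Sum>k<r. cmod (d k) * (2 * dl))"
    proof -
      have "cmod (\<Sum>k<r. cnj (d k) * z k) \<le> (\<Sum>k<r. cmod (cnj (d k) * z k))" by (rule norm_sum)
      also have "\<dots> \<le> (\<Sum>k<r. cmod (d k) * (2 * dl))"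
        by (rule sum_mono) (auto simp: norm_mult intro!: mult_left_mono zb)
      finally show ?thesis .
    qed
    then have "cmod C \<le> p * (\<Sum>k<r. cmod (d k) * (2 * dl))"
      unfolding C_eq norm_mult using pp by (simp add: mult_left_mono)
    also have "\<dots> = (\<Sum>k<r. \<epsilon>/24 * (2 * (p / s) * cmod (d k)))"
      unfolding dl_def sum_distrib_left using s0 by (intro sum.cong refl) (simp add: field_simps)
    also have "\<dots> \<le> (\<Sum>k<r. \<epsilon>/24 * ((p / s)\<^sup>2 + (cmod (d k))\<^sup>2))"
      using eps by (intro sum_mono mult_left_mono sum_squares_bound) auto
    also have "\<dots> = \<epsilon>/24 * (real r * (p / s)\<^sup>2 + w\<^sup>2)"
      unfolding w2 by (simp add: sum_distrib_left sum.distrib distrib_left)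
    also have "real r * (p / s)\<^sup>2 = p\<^sup>2" using s0 s2 r0 by (simp add: power_divide)
    finally show ?thesis .
  qed
  have ReC: "\<bar>2 * Re C\<bar> \<le> \<epsilon>/12 * (p\<^sup>2 + w\<^sup>2)" using Cb abs_Re_le_cmod[of C] by linarith
  define Mv where "Mv = (tnorm ms (L (\<lambda>i. X i - Y i)))\<^sup>2"
  define Nv where "Nv = (tnorm ns (\<lambda>i. X i - Y i))\<^sup>2"
  have MN: "\<bar>Mv - Nv\<bar> \<le> \<epsilon>/4 * Nv"
  proof -
    have "Mv - Nv = a1 * p\<^sup>2 + a2 * w\<^sup>2 + 2 * Re C" unfolding Mv_def Nv_def M N a1(2) a2(2)
      by (simp add: algebra_simps)
    moreover have "\<bar>a1 * p\<^sup>2\<bar> \<le> \<epsilon>/6 * p\<^sup>2"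
      unfolding abs_mult abs_power2 using a1(1) by (intro mult_right_mono) auto
    moreover have "\<bar>a2 * w\<^sup>2\<bar> \<le> \<epsilon>/6 * w\<^sup>2"
      unfolding abs_mult abs_power2 using a2(1) by (intro mult_right_mono) auto
    moreover have "\<epsilon>/4 * Nv = \<epsilon>/6 * p\<^sup>2 + \<epsilon>/6 * w\<^sup>2 + \<epsilon>/12 * (p\<^sup>2 + w\<^sup>2)" unfolding Nv_def N
      by (simp add: algebra_simps)
    ultimately show ?thesis using ReC by (smt (verit) abs_triangle_ineq)
  qed
  define V where "V = (\<lambda>k. if k = 0 then vect ms idx (L Pp) else vect ms idx (L (T (k - 1))))"
  define v where "v = vect ms idx (L (\<lambda>i. X i - Y i))"
  have v_span: "v \<in> vspan (Suc r) V"
  proof -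
    define c' where "c' k = (if k = 0 then 1 else d (k - 1))" for k
    have "v = (\<lambda>j. \<Sum>k<Suc r. c' k * V k j)"
    proof
      fix j
      show "v j = (\<Sum>k<Suc r. c' k * V k j)"
        unfolding v_def LXY LW sum.lessThan_Suc_shift c'_def V_def vect_def
        by (simp add: sum_distrib_left)
    qed
    then show ?thesis unfolding vspan_def by blast
  qed
  obtain bb where bb: "\<bar>bb\<bar> < \<epsilon>/3" "(vnorm m (mat_app m (prod_list ms) A v))\<^sup>2 = (1 + bb) * (vnorm (prod_list ms) v)\<^sup>2"
    using mJL_D[OF A_JL, of v] v_span unfolding V_def by auto
  have vM: "(vnorm (prod_list ms) v)\<^sup>2 = Mv" unfolding v_def Mv_def vnorm_vect[OF vect] ..
  have "\<bar>(1 + bb) * Mv - Nv\<bar> \<le> \<epsilon> * Nv"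
    by (rule final_arith[OF MN bb(1) eps]) (simp_all add: Mv_def Nv_def)
  then show "\<bar>(vnorm m (mat_app m (prod_list ms) A (vect ms idx (L (\<lambda>is. X is - Y is)))))\<^sup>2
        - (tnorm ns (\<lambda>is. X is - Y is))\<^sup>2\<bar>
     \<le> \<epsilon> * (tnorm ns (\<lambda>is. X is - Y is))\<^sup>2"
    using bb(2) vM unfolding v_def Nv_def by simp
qed

end
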